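(* Let $\kappa\ge1$, $n=\kappa+1$, and let $G\in\mathcal G_{[n;\kappa]}$ be skew-symmetric. Then $G$ is a zero-sum game: $\sum_{i=1}^n c_i(x)=0$ for every profile $x\in\{1,\dots,\kappa\}^n$.
   Context: A finite game $G\in\mathcal G_{[n;\kappa]}$ has players $\{1,\dots,n\}$, each with strategy set $\{1,\dots,\kappa\}$, and payoff functions $c_i:\{1,\dots,\kappa\}^n\to\mathbb R$. $G$ is skew-symmetric if for every permutation $\sigma\in\mathbf S_n$, every $i$ and every profile, $c_i(x_1,\dots,x_n)=\mathrm{sgn}(\sigma)\,c_{\sigma(i)}(x_{\sigma^{-1}(1)},\dots,x_{\sigma^{-1}(n)})$. *)

theory Defs
  imports "HOL-Library.FuncSet" "HOL-Combinatorics.Permutations" Complex_Main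
begin

definition profiles :: "nat \<Rightarrow> nat \<Rightarrow> (nat \<Rightarrow> nat) set" where
  "profiles n \<kappa> = {1..n} \<rightarrow>\<^sub>E {1..\<kappa>}"

definition skew_symmetric :: "nat \<Rightarrow> nat \<Rightarrow> (nat \<Rightarrow> (nat \<Rightarrow> nat) \<Rightarrow> real) \<Rightarrow> bool" where
  "skew_symmetric n \<kappa> c \<longleftrightarrow>
     (\<forall>\<sigma>. \<sigma> permutes {1..n} \<longrightarrow>
        (\<forall>i\<in>{1..n}. \<forall>x\<in>profiles n \<kappa>.
           c i x = of_int (sign \<sigma>) * c (\<sigma> i) (\<lambda>j. x (inv \<sigma> j))))"

definition zero_sum :: "nat \<Rightarrow> nat \<Rightarrow> (nat \<Rightarrow> (nat \<Rightarrow> nat) \<Rightarrow> real) \<Rightarrow> bool" where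
  "zero_sum n \<kappa> c \<longleftrightarrow> (\<forall>x\<in>profiles n \<kappa>. (\<Sum>i=1..n. c i x) = 0)"

end

theory Submission
  imports Defs
begin

theorem proposition4p2:
  fixes \<kappa> n :: nat and c :: "nat \<Rightarrow> (nat \<Rightarrow> nat) \<Rightarrow> real"
  assumes "\<kappa> \<ge> 1" and "n = \<kappa> + 1"
    and "skew_symmetric n \<kappa> c"
  shows "zero_sum n \<kappa> c"
  unfolding zero_sum_def
proof
  fix x assume x: "x \<in> profiles n \<kappa>"
  have img: "x ` {1..n} \<subseteq> {1..\<kappa>}" using x unfolding profiles_def by auto
  have "\<not> inj_on x {1..n}"
  proof
    assume "inj_on x {1..n}"
    then have "card {1..n} \<le> card {1..\<kappa>}" using img
      by (meson card_inj_on_le finite_atLeastAtMost image_subset_iff_funcset)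
    then show False using assms(2) by simp
  qed
  then obtain a b where ab: "a \<in> {1..n}" "b \<in> {1..n}" "a \<noteq> b" "x a = x b"
    unfolding inj_on_def by blast
  define \<tau> where "\<tau> = Transposition.transpose a b"
  have perm: "\<tau> permutes {1..n}" unfolding \<tau>_def using ab by (simp add: permutes_swap_id)
  have sg: "sign \<tau> = -1" unfolding \<tau>_def using ab by (simp add: sign_swap_id)
  have xe: "(\<lambda>j. x (inv \<tau> j)) = x"
  proof
    fix j show "x (inv \<tau> j) = x j" unfolding \<tau>_def using ab
      by (cases "j = a"; cases "j = b") auto
  qed
  have key: "\<And>i. i \<in> {1..n} \<Longrightarrow> c i x = - c (\<tau> i) x"
    using assms(3) perm x sg xe unfolding skew_symmetric_def by fastforce
  have z: "c i x = 0" if "i \<in> {1..n}" "i \<noteq> a" "i \<noteq> b" for i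
    using key[OF that(1)] that unfolding \<tau>_def by simp
  have cab: "c a x = - c b x" using key[OF ab(1)] unfolding \<tau>_def by simp
  have "(\<Sum>i=1..n. c i x) = (\<Sum>i\<in>{a,b}. c i x)"
    by (rule sum.mono_neutral_right) (use ab z in auto)
  also have "\<dots> = 0" using ab cab by simp
  finally show "(\<Sum>i=1..n. c i x) = 0" .
qed

end
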